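(* Let $T_0\in\mathcal{G}(X)$ and $T \in \mathcal{G}_{T_0}$. Let $D \subset L^2(Z|X)$ be a set with $\big\|\|f\|_{L^2(Z|X)}\big\|_{L^\infty(X)} \le 1$ for all $f\in D$, such that $D$ is dense, with respect to the $L^2(Z)$ norm, in the unit ball $\{f\in L^2(Z|X) : \|\|f\|_{L^2(Z|X)}\|_{L^\infty(X)}\le 1\}$. Suppose there is a subsequence $n_k$ such that for all $f_i, f_j \in D$, $$\lim_{k\to\infty}\big\|\mathbb{E}(T^{n_k}f_i\cdot\overline{f_j}|X) - \mathbb{E}(T_0^{n_k}f_i\cdot\overline{f_j}|X)\big\|_{L^2(X)} = 0.$$ Then $T \in \mathcal{R}_{T_0}$.
   Context: Let $(X,m)$ and $(Y,\nu)$ both be the unit interval with Lebesgue measure, and $(Z,\mu) = (X\times Y, m\times\nu)$. $\mathcal{G}(W)$ denotes the set of invertible measure-preserving transformations of a space $W$. $\mathcal{G}_{T_0} \subset \mathcal{G}(Z)$ is the set of transformations of the form $T(x,y) = (T_0x, T_x y)$ with $T_x \in \mathcal{G}(Y)$ (extensions of $T_0$); $T_0$ is identified with $T_0\times\mathrm{id}_Y$ on $Z$. For $f$ on $Z$, $T^nf = f\circ T^n$. $\mathbb{E}(\cdot|X)$ is conditional expectation onto the $\sigma$-algebra of sets $B\times Y$. $L^2(Z|X)$ is the space of $f\in L^2(Z)$ with $\|f\|_{L^2(Z|X)} := \mathbb{E}(|f|^2|X)^{1/2} \in L^\infty(X)$. $T\in\mathcal{G}_{T_0}$ is a rigid extension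 of $T_0$ if there is a subsequence $n_k$ such that for all $f,g\in L^2(Z|X)$, $\lim_{k\to\infty}\|\mathbb{E}(T^{n_k}f\cdot\overline{g}|X) - \mathbb{E}(T_0^{n_k}f\cdot\overline{g}|X)\|_{L^2(X)} = 0$; $\mathcal{R}_{T_0}$ is the set of rigid extensions. *)

theory Defs
  imports "HOL-Probability.Probability"
begin

text \<open>The unit interval with Lebesgue measure, and the product space Z = X x Y.\<close>
definition MX :: "real measure" where
  "MX = restrict_space lborel {0..1}"

definition MZ :: "(real \<times> real) measure" where
  "MZ = MX \<Otimes>\<^sub>M MX"

text \<open>The sub-sigma-algebra of Z consisting of the sets B x Y.\<close>
definition Xalg :: "(real \<times> real) measure" where
  "Xalg = vimage_algebra (space MZ) fst MX"

definition G :: "'a measure \<Rightarrow> ('a \<Rightarrow> 'a) set" where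
  "G W = {T. bij_betw T (space W) (space W) \<and> T \<in> measurable W W
             \<and> the_inv_into (space W) T \<in> measurable W W \<and> distr W W T = W}"

definition G_ext :: "(real \<Rightarrow> real) \<Rightarrow> (real \<times> real \<Rightarrow> real \<times> real) set" where
  "G_ext T0 = {T. T \<in> G MZ \<and> (\<exists>Tx :: real \<Rightarrow> real \<Rightarrow> real.
        \<forall>x \<in> space MX. Tx x \<in> G MX \<and> (\<forall>y \<in> space MX. T (x, y) = (T0 x, Tx x y)))}"

text \<open>T0 identified with T0 x id on Z.\<close>
definition liftX :: "(real \<Rightarrow> real) \<Rightarrow> real \<times> real \<Rightarrow> real \<times> real" where
  "liftX T0 = (\<lambda>(x, y). (T0 x, y))"

definition condexpX :: "(real \<times> real \<Rightarrow> complex) \<Rightarrow> real \<times> real \<Rightarrow> complex" where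
  "condexpX g = (\<lambda>z. complex_of_real (real_cond_exp MZ Xalg (\<lambda>w. Re (g w)) z)
                    + \<i> * complex_of_real (real_cond_exp MZ Xalg (\<lambda>w. Im (g w)) z))"

definition condnorm2 :: "(real \<times> real \<Rightarrow> complex) \<Rightarrow> real \<times> real \<Rightarrow> ennreal" where
  "condnorm2 f = nn_cond_exp MZ Xalg (\<lambda>z. ennreal ((cmod (f z))\<^sup>2))"

definition L2ZX :: "(real \<times> real \<Rightarrow> complex) set" where
  "L2ZX = {f. f \<in> borel_measurable MZ \<and> esssup MZ (condnorm2 f) < \<infinity>}"

text \<open>Unit ball of L^2(Z|X): || ||f||_{L^2(Z|X)} ||_{L^infty} \<le> 1 (equivalently, for squares).\<close>
definition unit_ballZX :: "(real \<times> real \<Rightarrow> complex) set" where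
  "unit_ballZX = {f \<in> L2ZX. esssup MZ (condnorm2 f) \<le> 1}"

text \<open>L^2(Z) norm. For X-measurable functions it equals the L^2(X) norm (nu(Y) = 1).\<close>
definition L2norm :: "(real \<times> real \<Rightarrow> complex) \<Rightarrow> real" where
  "L2norm h = sqrt (\<integral>z. (cmod (h z))\<^sup>2 \<partial>MZ)"

definition R_ext :: "(real \<Rightarrow> real) \<Rightarrow> (real \<times> real \<Rightarrow> real \<times> real) set" where
  "R_ext T0 = {T \<in> G_ext T0. \<exists>n :: nat \<Rightarrow> nat. strict_mono n \<and>
      (\<forall>f \<in> L2ZX. \<forall>g \<in> L2ZX.
         (\<lambda>k. L2norm (\<lambda>z. condexpX (\<lambda>w. f ((T ^^ n k) w) * cnj (g w)) z
                         - condexpX (\<lambda>w. f ((liftX T0 ^^ n k) w) * cnj (g w)) z))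
         \<longlonglongrightarrow> 0)}"

end

theory Submission
  imports Defs
begin


lemma space_MX: "space MX = {0..1}"
  by (simp add: MX_def space_restrict_space)

lemma sets_MX: "sets MX = sets (restrict_space lborel {0..1})"
  by (simp add: MX_def)

lemma prob_MX: "prob_space MX"
  unfolding MX_def by (rule prob_space_restrict_space) auto

lemma prob_MZ: "prob_space MZ"
  unfolding MZ_def using prob_MX by (simp add: prob_space_pair)

lemma space_MZ: "space MZ = {0..1} \<times> {0..1}"
  by (simp add: MZ_def space_pair_measure space_MX)

lemma fst_meas: "fst \<in> measurable MZ MX"
  unfolding MZ_def by simp

lemma fst_Pi: "fst \<in> space MZ \<rightarrow> space MX"
  by (rule funcsetI, rule measurable_space[OF fst_meas])

lemma sets_Xalg: "sets Xalg = {fst -` A \<inter> space MZ | A. A \<in> sets MX}"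
  unfolding Xalg_def by (rule sets_vimage_algebra2[OF fst_Pi])

lemma subalgX: "subalgebra MZ Xalg"
  unfolding subalgebra_def
proof
  show "space Xalg = space MZ" by (simp add: Xalg_def)
  show "sets Xalg \<subseteq> sets MZ"
    unfolding sets_Xalg using fst_meas by (auto simp: measurable_def)
qed

interpretation Z: sigma_finite_subalgebra MZ Xalg
proof -
  interpret prob_space MZ by (rule prob_MZ)
  interpret finite_measure_subalgebra MZ Xalg
    by unfold_locales (rule subalgX)
  show "sigma_finite_subalgebra MZ Xalg" by unfold_locales
qed

lemma nnce_lin:
  fixes \<alpha> \<beta> :: ennreal
  assumes [measurable]: "g \<in> borel_measurable MZ" "h \<in> borel_measurable MZ"
  shows "AE z in MZ. nn_cond_exp MZ Xalg (\<lambda>z. \<alpha> * g z + \<beta> * h z) z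
            = \<alpha> * nn_cond_exp MZ Xalg g z + \<beta> * nn_cond_exp MZ Xalg h z"
proof -
  have 1: "AE z in MZ. nn_cond_exp MZ Xalg (\<lambda>z. \<alpha> * g z) z + nn_cond_exp MZ Xalg (\<lambda>z. \<beta> * h z) z
      = nn_cond_exp MZ Xalg (\<lambda>z. \<alpha> * g z + \<beta> * h z) z"
    by (rule Z.nn_cond_exp_sum) auto
  have 2: "AE z in MZ. \<alpha> * nn_cond_exp MZ Xalg g z = nn_cond_exp MZ Xalg (\<lambda>z. \<alpha> * g z) z"
    by (rule Z.nn_cond_exp_prod[where f="\<lambda>_. \<alpha>"]) auto
  have 3: "AE z in MZ. \<beta> * nn_cond_exp MZ Xalg h z = nn_cond_exp MZ Xalg (\<lambda>z. \<beta> * h z) z"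
    by (rule Z.nn_cond_exp_prod[where f="\<lambda>_. \<beta>"]) auto
  from 1 2 3 show ?thesis by eventually_elim simp
qed

definition cb :: "(real \<times> real \<Rightarrow> complex) \<Rightarrow> real \<Rightarrow> bool" where
  "cb a C \<longleftrightarrow> a \<in> borel_measurable MZ \<and> C \<ge> 0 \<and>
     (AE z in MZ. nn_cond_exp MZ Xalg (\<lambda>z. ennreal ((cmod (a z))\<^sup>2)) z \<le> ennreal C)"

lemma cb_comb:
  assumes "cb a A" "cb b B" "c \<in> borel_measurable MZ" "\<alpha> \<ge> 0" "\<beta> \<ge> 0"
    and le: "\<And>z. (cmod (c z))\<^sup>2 \<le> \<alpha> * (cmod (a z))\<^sup>2 + \<beta> * (cmod (b z))\<^sup>2"
  shows "cb c (\<alpha> * A + \<beta> * B)"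
proof -
  have [measurable]: "a \<in> borel_measurable MZ" "b \<in> borel_measurable MZ" "c \<in> borel_measurable MZ"
    using assms unfolding cb_def by auto
  have A: "A \<ge> 0" "B \<ge> 0" using assms unfolding cb_def by auto
  have m: "AE z in MZ. nn_cond_exp MZ Xalg (\<lambda>z. ennreal ((cmod (c z))\<^sup>2)) z \<le>
      nn_cond_exp MZ Xalg (\<lambda>z. ennreal \<alpha> * ennreal ((cmod (a z))\<^sup>2) + ennreal \<beta> * ennreal ((cmod (b z))\<^sup>2)) z"
  proof (rule Z.nn_cond_exp_mono)
    show "AE z in MZ. ennreal ((cmod (c z))\<^sup>2) \<le> ennreal \<alpha> * ennreal ((cmod (a z))\<^sup>2) + ennreal \<beta> * ennreal ((cmod (b z))\<^sup>2)"
      using le assms(4,5) by (auto simp flip: ennreal_mult ennreal_plus intro!: ennreal_leI)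
  qed auto
  have l: "AE z in MZ. nn_cond_exp MZ Xalg (\<lambda>z. ennreal \<alpha> * ennreal ((cmod (a z))\<^sup>2) + ennreal \<beta> * ennreal ((cmod (b z))\<^sup>2)) z
     = ennreal \<alpha> * nn_cond_exp MZ Xalg (\<lambda>z. ennreal ((cmod (a z))\<^sup>2)) z + ennreal \<beta> * nn_cond_exp MZ Xalg (\<lambda>z. ennreal ((cmod (b z))\<^sup>2)) z"
    by (rule nnce_lin) auto
  have ba: "AE z in MZ. nn_cond_exp MZ Xalg (\<lambda>z. ennreal ((cmod (a z))\<^sup>2)) z \<le> ennreal A"
    and bb: "AE z in MZ. nn_cond_exp MZ Xalg (\<lambda>z. ennreal ((cmod (b z))\<^sup>2)) z \<le> ennreal B"
    using assms unfolding cb_def by auto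
  have "AE z in MZ. nn_cond_exp MZ Xalg (\<lambda>z. ennreal ((cmod (c z))\<^sup>2)) z \<le> ennreal (\<alpha> * A + \<beta> * B)"
    using m l ba bb
  proof eventually_elim
    case (elim z)
    have "ennreal \<alpha> * nn_cond_exp MZ Xalg (\<lambda>z. ennreal ((cmod (a z))\<^sup>2)) z + ennreal \<beta> * nn_cond_exp MZ Xalg (\<lambda>z. ennreal ((cmod (b z))\<^sup>2)) z
        \<le> ennreal \<alpha> * ennreal A + ennreal \<beta> * ennreal B"
      using elim by (intro add_mono mult_left_mono) auto
    also have "\<dots> = ennreal (\<alpha> * A + \<beta> * B)"
      using A assms(4,5) by (simp add: ennreal_mult ennreal_plus)
    finally show ?case using elim by simp
  qed
  then show ?thesis unfolding cb_def using A assms(4,5) by auto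
qed

lemma cb_int:
  assumes "cb a C"
  shows "(\<integral>\<^sup>+ z. ennreal ((cmod (a z))\<^sup>2) \<partial>MZ) \<le> ennreal C"
proof -
  have [measurable]: "a \<in> borel_measurable MZ" using assms unfolding cb_def by auto
  have "(\<integral>\<^sup>+ z. ennreal ((cmod (a z))\<^sup>2) \<partial>MZ) = (\<integral>\<^sup>+ z. 1 * ennreal ((cmod (a z))\<^sup>2) \<partial>MZ)" by simp
  also have "\<dots> = (\<integral>\<^sup>+ z. 1 * nn_cond_exp MZ Xalg (\<lambda>z. ennreal ((cmod (a z))\<^sup>2)) z \<partial>MZ)"
    by (rule Z.nn_cond_exp_intg[symmetric]) auto
  also have "\<dots> \<le> (\<integral>\<^sup>+ z. ennreal C \<partial>MZ)"
    using assms unfolding cb_def by (intro nn_integral_mono_AE) auto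
  also have "\<dots> = ennreal C"
    using prob_space.emeasure_space_1[OF prob_MZ] by simp
  finally show ?thesis .
qed


locale shiftU =
  fixes T0 :: "real \<Rightarrow> real" and U :: "real \<times> real \<Rightarrow> real \<times> real"
  assumes T0: "T0 \<in> G MX"
    and Umeas: "U \<in> measurable MZ MZ"
    and Upres: "distr MZ MZ U = MZ"
    and Ufst: "\<And>z. z \<in> space MZ \<Longrightarrow> fst (U z) = T0 (fst z)"
begin

lemma T0meas: "T0 \<in> measurable MX MX" and Tinvmeas: "the_inv_into (space MX) T0 \<in> measurable MX MX"
  and T0bij: "bij_betw T0 (space MX) (space MX)"
  using T0 unfolding G_def by auto

lemma U_Xalg: "U \<in> measurable Xalg Xalg"
  unfolding Xalg_def
proof (rule measurable_vimage_algebra2)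
  show "U \<in> space (vimage_algebra (space MZ) fst MX) \<rightarrow> space MZ"
    using measurable_space[OF Umeas] by auto
  have "(\<lambda>x. T0 (fst x)) \<in> measurable (vimage_algebra (space MZ) fst MX) MX"
    using measurable_compose[OF measurable_vimage_algebra1[OF fst_Pi] T0meas] by (simp add: o_def)
  then show "(\<lambda>x. fst (U x)) \<in> measurable (vimage_algebra (space MZ) fst MX) MX"
    by (rule measurable_cong[THEN iffD1, rotated]) (simp add: Ufst)
qed

lemma one_step:
  assumes "cb b C"
  shows "cb (\<lambda>z. b (U z)) C"
proof -
  have [measurable]: "b \<in> borel_measurable MZ" and C: "C \<ge> 0" using assms unfolding cb_def by auto
  note Umeas[measurable]
  define E where "E = nn_cond_exp MZ Xalg (\<lambda>z. ennreal ((cmod (b z))\<^sup>2))"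
  have EX[measurable]: "E \<in> borel_measurable Xalg" unfolding E_def by simp
  have EZ[measurable]: "E \<in> borel_measurable MZ" unfolding E_def by simp
  have EUX: "(\<lambda>z. E (U z)) \<in> borel_measurable Xalg"
    using measurable_compose[OF U_Xalg EX] by (simp add: o_def)
  have ch: "AE z in MZ. E (U z) = nn_cond_exp MZ Xalg (\<lambda>z. ennreal ((cmod (b (U z)))\<^sup>2)) z"
  proof (rule Z.nn_cond_exp_charact)
    fix A assume "A \<in> sets Xalg"
    then obtain B where B: "B \<in> sets MX" and A: "A = fst -` B \<inter> space MZ"
      unfolding sets_Xalg by auto
    define B' where "B' = the_inv_into (space MX) T0 -` B \<inter> space MX"
    have B': "B' \<in> sets MX" unfolding B'_def using Tinvmeas B by (rule measurable_sets)
    define A' where "A' = fst -` B' \<inter> space MZ"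
    have A'[measurable]: "A' \<in> sets MZ"
      unfolding A'_def using fst_meas B' by (rule measurable_sets)
    have A'X: "A' \<in> sets Xalg" unfolding sets_Xalg A'_def using B' by auto
    have ind: "indicator A z = (indicator A' (U z) :: ennreal)" if z: "z \<in> space MZ" for z
    proof -
      have Uz: "U z \<in> space MZ" using measurable_space[OF Umeas z] .
      have fz: "fst z \<in> space MX" using fst_Pi z by auto
      have inv: "the_inv_into (space MX) T0 (T0 (fst z)) = fst z"
        using T0bij fz by (simp add: bij_betw_def the_inv_into_f_f)
      have T0z: "T0 (fst z) \<in> space MX" using T0bij fz by (auto simp: bij_betw_def)
      have "z \<in> A \<longleftrightarrow> U z \<in> A'"
        unfolding A A'_def B'_def using z Uz Ufst[OF z] inv T0z by auto
      then show ?thesis by (simp add: indicator_def)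
    qed
    have "(\<integral>\<^sup>+ z \<in> A. ennreal ((cmod (b (U z)))\<^sup>2) \<partial>MZ)
        = (\<integral>\<^sup>+ z. indicator A' (U z) * ennreal ((cmod (b (U z)))\<^sup>2) \<partial>MZ)"
      by (rule nn_integral_cong) (simp add: ind mult.commute)
    also have "\<dots> = (\<integral>\<^sup>+ w. indicator A' w * ennreal ((cmod (b w))\<^sup>2) \<partial>distr MZ MZ U)"
      by (rule nn_integral_distr[symmetric]) auto
    also have "\<dots> = (\<integral>\<^sup>+ w. indicator A' w * ennreal ((cmod (b w))\<^sup>2) \<partial>MZ)"
      by (simp add: Upres)
    also have "\<dots> = (\<integral>\<^sup>+ w. indicator A' w * E w \<partial>MZ)"
      unfolding E_def
      by (rule Z.nn_cond_exp_intg[symmetric]) (auto intro: borel_measurable_indicator A'X)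
    also have "\<dots> = (\<integral>\<^sup>+ w. indicator A' w * E w \<partial>distr MZ MZ U)"
      by (simp add: Upres)
    also have "\<dots> = (\<integral>\<^sup>+ z. indicator A' (U z) * E (U z) \<partial>MZ)"
      by (rule nn_integral_distr) auto
    also have "\<dots> = (\<integral>\<^sup>+ z \<in> A. E (U z) \<partial>MZ)"
      by (rule nn_integral_cong) (simp add: ind mult.commute)
    finally show "(\<integral>\<^sup>+ z \<in> A. ennreal ((cmod (b (U z)))\<^sup>2) \<partial>MZ) = (\<integral>\<^sup>+ z \<in> A. E (U z) \<partial>MZ)" .
  next
    show "(\<lambda>z. ennreal ((cmod (b (U z)))\<^sup>2)) \<in> borel_measurable MZ" by measurable
  next
    show "(\<lambda>z. E (U z)) \<in> borel_measurable Xalg" by (rule EUX)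
  qed
  have "AE z in MZ. E z \<le> ennreal C" using assms unfolding cb_def E_def by auto
  then have "AE z in distr MZ MZ U. E z \<le> ennreal C" unfolding Upres by simp
  then have "AE z in MZ. E (U z) \<le> ennreal C" by (rule AE_distrD[OF Umeas])
  with ch have "AE z in MZ. nn_cond_exp MZ Xalg (\<lambda>z. ennreal ((cmod (b (U z)))\<^sup>2)) z \<le> ennreal C"
    by eventually_elim simp
  then show ?thesis unfolding cb_def using C by auto
qed

lemma iter_step:
  assumes "cb b C"
  shows "cb (\<lambda>z. b ((U ^^ n) z)) C"
proof (induction n)
  case 0
  then show ?case using assms by simp
next
  case (Suc n)
  from one_step[OF Suc] show ?case by (simp add: funpow_swap1)
qed

lemma Un_meas: "(U ^^ n) \<in> measurable MZ MZ"
  by (rule measurable_compose_n[OF Umeas])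

lemma Un_pres: "distr MZ MZ (U ^^ n) = MZ"
proof (induction n)
  case 0
  then show ?case by (simp add: distr_id2 del: distr_id) 
next
  case (Suc n)
  have "distr MZ MZ (U ^^ Suc n) = distr MZ MZ ((U ^^ n) \<circ> U)" by (subst funpow_Suc_right) (rule refl)
  also have "\<dots> = distr (distr MZ MZ U) MZ (U ^^ n)"
    by (rule distr_distr[symmetric]) (auto intro: Umeas Un_meas)
  also have "\<dots> = MZ" using Suc by (simp add: Upres)
  finally show ?case .
qed

lemma nn_int_pres:
  assumes "h \<in> borel_measurable MZ"
  shows "(\<integral>\<^sup>+ z. h ((U ^^ n) z) \<partial>MZ) = (\<integral>\<^sup>+ z. h z \<partial>MZ)"
proof -
  have "(\<integral>\<^sup>+ z. h z \<partial>MZ) = (\<integral>\<^sup>+ z. h z \<partial>distr MZ MZ (U ^^ n))" by (simp add: Un_pres)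
  also have "\<dots> = (\<integral>\<^sup>+ z. h ((U ^^ n) z) \<partial>MZ)"
    by (rule nn_integral_distr) (auto intro: Un_meas assms)
  finally show ?thesis ..
qed

end


lemma cnj_meas[measurable]:
  "f \<in> borel_measurable M \<Longrightarrow> (\<lambda>x. cnj (f x)) \<in> borel_measurable M"
proof -
  assume f: "f \<in> borel_measurable M"
  have "continuous_on UNIV (\<lambda>x. cnj x)"
    by (rule bounded_linear.continuous_on[OF bounded_linear_cnj continuous_on_id])
  then have "(\<lambda>x. cnj x) \<in> borel_measurable borel" by (rule borel_measurable_continuous_onI)
  from measurable_compose[OF f this] show ?thesis .
qed

definition Phi :: "(real \<times> real \<Rightarrow> complex) \<Rightarrow> ennreal" where
  "Phi u = (\<integral>\<^sup>+ z. ennreal ((cmod (u z))\<^sup>2) \<partial>MZ)"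

lemma condexpX_meas[measurable]: "condexpX h \<in> borel_measurable MZ"
  unfolding condexpX_def by measurable

lemma L2norm_Phi:
  assumes [measurable]: "u \<in> borel_measurable MZ"
  shows "L2norm u = sqrt (enn2real (Phi u))"
  unfolding L2norm_def Phi_def
  by (subst integral_eq_nn_integral) auto

lemma cb_Phi: "cb a C \<Longrightarrow> Phi a \<le> ennreal C"
  unfolding Phi_def by (rule cb_int)

lemma cexp_bound:
  assumes [measurable]: "h \<in> borel_measurable MZ"
  shows "AE z in MZ. ennreal (cmod (condexpX h z)) \<le> 2 * nn_cond_exp MZ Xalg (\<lambda>z. ennreal (cmod (h z))) z"
proof -
  have r: "AE z in MZ. ennreal \<bar>real_cond_exp MZ Xalg (\<lambda>w. Re (h w)) z\<bar> \<le> nn_cond_exp MZ Xalg (\<lambda>w. ennreal \<bar>Re (h w)\<bar>) z"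
    by (rule Z.real_cond_exp_abs) measurable
  have i: "AE z in MZ. ennreal \<bar>real_cond_exp MZ Xalg (\<lambda>w. Im (h w)) z\<bar> \<le> nn_cond_exp MZ Xalg (\<lambda>w. ennreal \<bar>Im (h w)\<bar>) z"
    by (rule Z.real_cond_exp_abs) measurable
  have r2: "AE z in MZ. nn_cond_exp MZ Xalg (\<lambda>w. ennreal \<bar>Re (h w)\<bar>) z \<le> nn_cond_exp MZ Xalg (\<lambda>w. ennreal (cmod (h w))) z"
    by (rule Z.nn_cond_exp_mono) (simp add: ennreal_leI abs_Re_le_cmod, measurable, measurable)
  have i2: "AE z in MZ. nn_cond_exp MZ Xalg (\<lambda>w. ennreal \<bar>Im (h w)\<bar>) z \<le> nn_cond_exp MZ Xalg (\<lambda>w. ennreal (cmod (h w))) z"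
    by (rule Z.nn_cond_exp_mono) (simp add: ennreal_leI abs_Im_le_cmod, measurable, measurable)
  from r i r2 i2 show ?thesis
  proof eventually_elim
    case (elim z)
    let ?R = "real_cond_exp MZ Xalg (\<lambda>w. Re (h w)) z" and ?I = "real_cond_exp MZ Xalg (\<lambda>w. Im (h w)) z"
    have "cmod (condexpX h z) \<le> \<bar>?R\<bar> + \<bar>?I\<bar>"
      using cmod_le[of "condexpX h z"] by (simp add: condexpX_def)
    then have "ennreal (cmod (condexpX h z)) \<le> ennreal (\<bar>?R\<bar> + \<bar>?I\<bar>)" by (rule ennreal_leI)
    also have "\<dots> = ennreal \<bar>?R\<bar> + ennreal \<bar>?I\<bar>" by (rule ennreal_plus) auto
    also have "\<dots> \<le> nn_cond_exp MZ Xalg (\<lambda>w. ennreal (cmod (h w))) z + nn_cond_exp MZ Xalg (\<lambda>w. ennreal (cmod (h w))) z"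
      by (rule add_mono[OF order_trans[OF elim(1) elim(3)] order_trans[OF elim(2) elim(4)]])
    finally show ?case by (simp add: mult_2)
  qed
qed

lemma cexp_L1:
  assumes [measurable]: "h \<in> borel_measurable MZ"
  shows "(\<integral>\<^sup>+ z. ennreal (cmod (condexpX h z)) \<partial>MZ) \<le> 2 * (\<integral>\<^sup>+ z. ennreal (cmod (h z)) \<partial>MZ)"
proof -
  have "(\<integral>\<^sup>+ z. ennreal (cmod (condexpX h z)) \<partial>MZ) \<le> (\<integral>\<^sup>+ z. 2 * nn_cond_exp MZ Xalg (\<lambda>z. ennreal (cmod (h z))) z \<partial>MZ)"
    by (rule nn_integral_mono_AE[OF cexp_bound[OF assms]])
  also have "\<dots> = 2 * (\<integral>\<^sup>+ z. nn_cond_exp MZ Xalg (\<lambda>z. ennreal (cmod (h z))) z \<partial>MZ)"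
    by (rule nn_integral_cmult) measurable
  also have "(\<integral>\<^sup>+ z. nn_cond_exp MZ Xalg (\<lambda>z. ennreal (cmod (h z))) z \<partial>MZ)
      = (\<integral>\<^sup>+ z. 1 * nn_cond_exp MZ Xalg (\<lambda>z. ennreal (cmod (h z))) z \<partial>MZ)" by simp
  also have "\<dots> = (\<integral>\<^sup>+ z. 1 * ennreal (cmod (h z)) \<partial>MZ)"
    by (rule Z.nn_cond_exp_intg; measurable)
  finally show ?thesis by simp
qed

lemma prod_le: "cmod (a * cnj b) \<le> (cmod a)\<^sup>2 + (cmod b)\<^sup>2"
proof -
  have "0 \<le> (cmod a - cmod b)\<^sup>2" by simp
  then have "2 * (cmod a * cmod b) \<le> (cmod a)\<^sup>2 + (cmod b)\<^sup>2" by (simp add: power2_diff)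
  moreover have "0 \<le> cmod a * cmod b" by simp
  ultimately have "cmod a * cmod b \<le> (cmod a)\<^sup>2 + (cmod b)\<^sup>2" by linarith
  then show ?thesis by (simp add: norm_mult)
qed

lemma cross_integrable:
  assumes "cb a A" "cb b B"
  shows "integrable MZ (\<lambda>w. a w * cnj (b w))"
proof -
  have [measurable]: "a \<in> borel_measurable MZ" "b \<in> borel_measurable MZ" using assms unfolding cb_def by auto
  have "(\<integral>\<^sup>+ w. ennreal (norm (a w * cnj (b w))) \<partial>MZ) \<le> (\<integral>\<^sup>+ w. ennreal ((cmod (a w))\<^sup>2) + ennreal ((cmod (b w))\<^sup>2) \<partial>MZ)"
    by (intro nn_integral_mono) (simp add: ennreal_plus[symmetric] ennreal_leI prod_le del: ennreal_plus)
  also have "\<dots> = Phi a + Phi b" unfolding Phi_def by (rule nn_integral_add) auto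
  also have "\<dots> \<le> ennreal A + ennreal B" using cb_Phi assms by (intro add_mono) auto
  also have "\<dots> < \<infinity>" by (simp flip: ennreal_plus)
  finally show ?thesis by (intro integrableI_bounded) auto
qed

lemma cross_bound:
  assumes "cb a A" "cb b B"
  shows "AE z in MZ. cmod (condexpX (\<lambda>w. a w * cnj (b w)) z) \<le> 2 * (A + B)"
proof -
  have [measurable]: "a \<in> borel_measurable MZ" "b \<in> borel_measurable MZ" using assms unfolding cb_def by auto
  have AB: "A \<ge> 0" "B \<ge> 0" using assms unfolding cb_def by auto
  have m: "AE z in MZ. nn_cond_exp MZ Xalg (\<lambda>w. ennreal (cmod (a w * cnj (b w)))) z \<le>
      nn_cond_exp MZ Xalg (\<lambda>w. 1 * ennreal ((cmod (a w))\<^sup>2) + 1 * ennreal ((cmod (b w))\<^sup>2)) z"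
    by (rule Z.nn_cond_exp_mono) (auto simp: ennreal_plus[symmetric] ennreal_leI prod_le simp del: ennreal_plus)
  have l: "AE z in MZ. nn_cond_exp MZ Xalg (\<lambda>w. 1 * ennreal ((cmod (a w))\<^sup>2) + 1 * ennreal ((cmod (b w))\<^sup>2)) z
     = 1 * nn_cond_exp MZ Xalg (\<lambda>w. ennreal ((cmod (a w))\<^sup>2)) z + 1 * nn_cond_exp MZ Xalg (\<lambda>w. ennreal ((cmod (b w))\<^sup>2)) z"
    by (rule nnce_lin) auto
  have ba: "AE z in MZ. nn_cond_exp MZ Xalg (\<lambda>z. ennreal ((cmod (a z))\<^sup>2)) z \<le> ennreal A"
    and bb: "AE z in MZ. nn_cond_exp MZ Xalg (\<lambda>z. ennreal ((cmod (b z))\<^sup>2)) z \<le> ennreal B"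
    using assms unfolding cb_def by auto
  have cm: "(\<lambda>w. a w * cnj (b w)) \<in> borel_measurable MZ" by measurable
  from cexp_bound[OF cm] m l ba bb
  show ?thesis
  proof eventually_elim
    case (elim z)
    have "nn_cond_exp MZ Xalg (\<lambda>w. ennreal (cmod (a w * cnj (b w)))) z \<le> ennreal A + ennreal B"
    proof -
      have "nn_cond_exp MZ Xalg (\<lambda>w. ennreal (cmod (a w * cnj (b w)))) z \<le>
          1 * nn_cond_exp MZ Xalg (\<lambda>w. ennreal ((cmod (a w))\<^sup>2)) z + 1 * nn_cond_exp MZ Xalg (\<lambda>w. ennreal ((cmod (b w))\<^sup>2)) z"
        using elim(2) unfolding elim(3) .
      also have "\<dots> \<le> ennreal A + ennreal B" using elim(4,5) by (simp add: add_mono)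
      finally show ?thesis .
    qed
    then have "2 * nn_cond_exp MZ Xalg (\<lambda>w. ennreal (cmod (a w * cnj (b w)))) z \<le> 2 * (ennreal A + ennreal B)"
      by (rule mult_left_mono) simp
    then have "ennreal (cmod (condexpX (\<lambda>w. a w * cnj (b w)) z)) \<le> 2 * (ennreal A + ennreal B)"
      using elim(1) by (rule order_trans[rotated])
    also have "\<dots> = ennreal (2 * (A + B))" using AB by (simp add: ennreal_plus ennreal_mult)
    finally have "ennreal (cmod (condexpX (\<lambda>w. a w * cnj (b w)) z)) \<le> ennreal (2 * (A + B))" .
    then show ?case by (subst (asm) ennreal_le_iff) (use AB in auto)
  qed
qed

lemma amgm:
  fixes x y d :: real
  assumes "x \<ge> 0" "y \<ge> 0" "d > 0"
  shows "x * y \<le> x\<^sup>2 / d + d * y\<^sup>2"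
proof -
  have "0 \<le> (x - d * y)\<^sup>2" by simp
  then have "2 * (d * (x * y)) \<le> x\<^sup>2 + (d * y)\<^sup>2" by (simp add: power2_diff algebra_simps)
  moreover have "0 \<le> d * (x * y)" using assms by simp
  ultimately have le: "d * (x * y) \<le> x\<^sup>2 + (d * y)\<^sup>2" by linarith
  have eq: "x\<^sup>2 / d + d * y\<^sup>2 = (x\<^sup>2 + (d * y)\<^sup>2) / d"
    using assms by (simp add: field_simps power2_eq_square)
  show ?thesis unfolding eq using le assms by (simp add: pos_le_divide_eq mult.commute)
qed

lemma cross_Phi:
  assumes "cb a A" "cb b B" "d > 0"
  shows "Phi (condexpX (\<lambda>w. a w * cnj (b w))) \<le> ennreal (4 * (A + B)) * (ennreal (1/d) * Phi a + ennreal d * Phi b)"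
proof -
  have [measurable]: "a \<in> borel_measurable MZ" "b \<in> borel_measurable MZ" using assms unfolding cb_def by auto
  have AB: "A \<ge> 0" "B \<ge> 0" using assms unfolding cb_def by auto
  let ?c = "condexpX (\<lambda>w. a w * cnj (b w))"
  have "Phi ?c \<le> (\<integral>\<^sup>+ z. ennreal (2 * (A + B)) * ennreal (cmod (?c z)) \<partial>MZ)"
    unfolding Phi_def
  proof (rule nn_integral_mono_AE)
    show "AE z in MZ. ennreal ((cmod (?c z))\<^sup>2) \<le> ennreal (2 * (A + B)) * ennreal (cmod (?c z))"
      using cross_bound[OF assms(1,2)]
    proof eventually_elim
      case (elim z)
      have "(cmod (?c z))\<^sup>2 \<le> 2 * (A + B) * cmod (?c z)"
        using elim by (simp add: power2_eq_square mult_right_mono)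
      then have "ennreal ((cmod (?c z))\<^sup>2) \<le> ennreal (2 * (A + B) * cmod (?c z))" by (rule ennreal_leI)
      also have "\<dots> = ennreal (2 * (A + B)) * ennreal (cmod (?c z))"
        by (rule ennreal_mult) (use AB in auto)
      finally show ?case .
    qed
  qed
  also have "\<dots> = ennreal (2 * (A + B)) * (\<integral>\<^sup>+ z. ennreal (cmod (?c z)) \<partial>MZ)"
    by (rule nn_integral_cmult) auto
  also have "\<dots> \<le> ennreal (2 * (A + B)) * (2 * (\<integral>\<^sup>+ z. ennreal (cmod (a z * cnj (b z))) \<partial>MZ))"
    by (intro mult_left_mono cexp_L1) auto
  also have "(\<integral>\<^sup>+ z. ennreal (cmod (a z * cnj (b z))) \<partial>MZ) \<le>
      (\<integral>\<^sup>+ z. ennreal (1/d) * ennreal ((cmod (a z))\<^sup>2) + ennreal d * ennreal ((cmod (b z))\<^sup>2) \<partial>MZ)"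
  proof (rule nn_integral_mono)
    fix z
    have "cmod (a z * cnj (b z)) \<le> (cmod (a z))\<^sup>2 / d + d * (cmod (b z))\<^sup>2"
      using amgm[of "cmod (a z)" "cmod (b z)" d] assms(3) by (simp add: norm_mult)
    then show "ennreal (cmod (a z * cnj (b z))) \<le> ennreal (1/d) * ennreal ((cmod (a z))\<^sup>2) + ennreal d * ennreal ((cmod (b z))\<^sup>2)"
      using assms(3) by (simp add: ennreal_mult[symmetric] ennreal_plus[symmetric] ennreal_leI del: ennreal_plus)
  qed
  also have "\<dots> = ennreal (1/d) * Phi a + ennreal d * Phi b"
    unfolding Phi_def by (subst nn_integral_add) (auto simp: nn_integral_cmult)
  finally have "Phi ?c \<le> ennreal (2 * (A + B)) * (2 * (ennreal (1/d) * Phi a + ennreal d * Phi b))"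
    by (simp add: mult_left_mono)
  also have "\<dots> = (ennreal (2 * (A + B)) * ennreal 2) * (ennreal (1/d) * Phi a + ennreal d * Phi b)"
    by (simp add: mult.assoc)
  also have "ennreal (2 * (A + B)) * ennreal 2 = ennreal (4 * (A + B))"
    by (subst ennreal_mult[symmetric]) (use AB in auto)
  finally have "Phi ?c \<le> ennreal (4 * (A + B)) * (ennreal (1/d) * Phi a + ennreal d * Phi b)" .
  then show ?thesis .
qed


lemma cross_Phi':
  assumes "cb a A" "cb b B" "d > 0" "Phi a \<le> ennreal \<alpha>" "Phi b \<le> ennreal \<beta>" "\<alpha> \<ge> 0" "\<beta> \<ge> 0"
  shows "Phi (condexpX (\<lambda>w. a w * cnj (b w))) \<le> ennreal (4 * (A + B) * (\<alpha> / d + d * \<beta>))"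
proof -
  have AB: "A \<ge> 0" "B \<ge> 0" using assms unfolding cb_def by auto
  have "ennreal (1/d) * Phi a + ennreal d * Phi b \<le> ennreal (1/d) * ennreal \<alpha> + ennreal d * ennreal \<beta>"
    using assms by (intro add_mono mult_left_mono) auto
  also have "\<dots> = ennreal (\<alpha> / d) + ennreal (d * \<beta>)"
    using assms by (simp add: ennreal_mult[symmetric])
  also have "\<dots> = ennreal (\<alpha> / d + d * \<beta>)"
    by (rule ennreal_plus[symmetric]) (use assms in auto)
  finally have "ennreal (4 * (A + B)) * (ennreal (1/d) * Phi a + ennreal d * Phi b) \<le> ennreal (4 * (A + B)) * ennreal (\<alpha> / d + d * \<beta>)"
    by (rule mult_left_mono) simp
  also have "\<dots> = ennreal (4 * (A + B) * (\<alpha> / d + d * \<beta>))"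
    by (rule ennreal_mult[symmetric]) (use AB assms in auto)
  finally show ?thesis using cross_Phi[OF assms(1,2,3)] by (rule order_trans[rotated])
qed

lemma sq_sum_le: "(a + b)\<^sup>2 \<le> 2 * a\<^sup>2 + 2 * (b::real)\<^sup>2"
proof -
  have "(a + b)\<^sup>2 + (a - b)\<^sup>2 = 2 * a\<^sup>2 + 2 * b\<^sup>2" by algebra
  moreover have "0 \<le> (a - b)\<^sup>2" by simp
  ultimately show ?thesis by linarith
qed

lemma sq_diff_le: "(cmod (x - complex_of_real c * y))\<^sup>2 \<le> 2 * (cmod x)\<^sup>2 + (2 * c\<^sup>2) * (cmod y)\<^sup>2"
proof -
  have t: "cmod (x - complex_of_real c * y) \<le> cmod x + \<bar>c\<bar> * cmod y"
    using norm_triangle_ineq4[of x "complex_of_real c * y"] by (simp add: norm_mult)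
  have "(cmod (x - complex_of_real c * y))\<^sup>2 \<le> (cmod x + \<bar>c\<bar> * cmod y)\<^sup>2"
    using t by (intro power_mono) auto
  also have "\<dots> \<le> 2 * (cmod x)\<^sup>2 + 2 * (\<bar>c\<bar> * cmod y)\<^sup>2"
    by (rule sq_sum_le)
  also have "(\<bar>c\<bar> * cmod y)\<^sup>2 = c\<^sup>2 * (cmod y)\<^sup>2" by (simp add: power_mult_distrib)
  finally show ?thesis by simp
qed

lemma cb_mono: "cb a C \<Longrightarrow> C \<le> C' \<Longrightarrow> cb a C'"
proof -
  assume a: "cb a C" and CC: "C \<le> C'"
  have c: "ennreal C \<le> ennreal C'" using CC by (rule ennreal_leI)
  have "AE z in MZ. nn_cond_exp MZ Xalg (\<lambda>z. ennreal ((cmod (a z))\<^sup>2)) z \<le> ennreal C"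
    using a unfolding cb_def by auto
  then have "AE z in MZ. nn_cond_exp MZ Xalg (\<lambda>z. ennreal ((cmod (a z))\<^sup>2)) z \<le> ennreal C'"
    by (rule eventually_mono) (erule order_trans[OF _ c])
  then show ?thesis using a CC unfolding cb_def by auto
qed

lemma cb_diff:
  assumes "cb x A" "cb y B" "c \<ge> 0"
  shows "cb (\<lambda>z. x z - complex_of_real c * y z) (2 * A + (2 * c\<^sup>2) * B)"
  using assms by (intro cb_comb[OF assms(1,2)] sq_diff_le) (auto simp: cb_def)

lemma cb_scale:
  assumes "cb x A"
  shows "cb (\<lambda>z. complex_of_real c * x z) (c\<^sup>2 * A + 0 * A)"
proof (rule cb_comb[OF assms assms])
  show "(\<lambda>z. complex_of_real c * x z) \<in> borel_measurable MZ" using assms unfolding cb_def by auto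
  fix z show "(cmod (complex_of_real c * x z))\<^sup>2 \<le> c\<^sup>2 * (cmod (x z))\<^sup>2 + 0 * (cmod (x z))\<^sup>2"
    by (simp add: norm_mult power_mult_distrib)
qed auto

lemma Phi_diff:
  assumes [measurable]: "u \<in> borel_measurable MZ" "v \<in> borel_measurable MZ"
  shows "Phi (\<lambda>z. u z - v z) \<le> 2 * Phi u + 2 * Phi v"
proof -
  have "Phi (\<lambda>z. u z - v z) \<le> (\<integral>\<^sup>+ z. 2 * ennreal ((cmod (u z))\<^sup>2) + 2 * ennreal ((cmod (v z))\<^sup>2) \<partial>MZ)"
    unfolding Phi_def
  proof (rule nn_integral_mono)
    fix z
    have "(cmod (u z - complex_of_real 1 * v z))\<^sup>2 \<le> 2 * (cmod (u z))\<^sup>2 + (2 * 1\<^sup>2) * (cmod (v z))\<^sup>2"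
      by (rule sq_diff_le)
    then have "ennreal ((cmod (u z - v z))\<^sup>2) \<le> ennreal (2 * (cmod (u z))\<^sup>2 + 2 * (cmod (v z))\<^sup>2)"
      by (intro ennreal_leI) simp
    also have "ennreal (2 * (cmod (u z))\<^sup>2 + 2 * (cmod (v z))\<^sup>2) = ennreal (2 * (cmod (u z))\<^sup>2) + ennreal (2 * (cmod (v z))\<^sup>2)"
      by (rule ennreal_plus) auto
    finally show "ennreal ((cmod (u z - v z))\<^sup>2) \<le> 2 * ennreal ((cmod (u z))\<^sup>2) + 2 * ennreal ((cmod (v z))\<^sup>2)"
      by (simp add: ennreal_mult)
  qed
  also have "\<dots> = 2 * Phi u + 2 * Phi v"
    unfolding Phi_def by (subst nn_integral_add) (auto simp: nn_integral_cmult)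
  finally show ?thesis .
qed

lemma Phi_L2_lt:
  assumes [measurable]: "u \<in> borel_measurable MZ" and fin: "Phi u < \<infinity>" and lt: "L2norm u < r"
  shows "Phi u < ennreal (r\<^sup>2)"
proof -
  obtain p where p: "Phi u = ennreal p" "p \<ge> 0" using fin by (cases "Phi u") auto
  have "sqrt p < r" using lt p by (simp add: L2norm_Phi)
  then have "(sqrt p)\<^sup>2 < r\<^sup>2" using p(2) by (intro power_strict_mono) auto
  then have "p < r\<^sup>2" using p(2) by simp
  then show ?thesis using p by (auto intro!: ennreal_lessI)
qed

lemma L2_Phi_lt:
  assumes [measurable]: "u \<in> borel_measurable MZ" and lt: "Phi u < ennreal (r\<^sup>2)" and r: "r > 0"
  shows "L2norm u < r"
proof -
  obtain p where p: "Phi u = ennreal p" "p \<ge> 0" using lt by (cases "Phi u") auto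
  have "p < r\<^sup>2" using lt p r by (simp add: ennreal_less_iff)
  then have "sqrt p < r" using r p by (simp add: real_sqrt_less_iff real_less_lsqrt)
  then show ?thesis using p by (simp add: L2norm_Phi)
qed

lemma condexpX_add:
  assumes "integrable MZ h1" "integrable MZ h2"
  shows "AE z in MZ. condexpX (\<lambda>w. h1 w + h2 w) z = condexpX h1 z + condexpX h2 z"
proof -
  have r: "AE z in MZ. real_cond_exp MZ Xalg (\<lambda>w. Re (h1 w) + Re (h2 w)) z
      = real_cond_exp MZ Xalg (\<lambda>w. Re (h1 w)) z + real_cond_exp MZ Xalg (\<lambda>w. Re (h2 w)) z"
    by (rule Z.real_cond_exp_add) (auto intro: assms)
  have i: "AE z in MZ. real_cond_exp MZ Xalg (\<lambda>w. Im (h1 w) + Im (h2 w)) z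
      = real_cond_exp MZ Xalg (\<lambda>w. Im (h1 w)) z + real_cond_exp MZ Xalg (\<lambda>w. Im (h2 w)) z"
    by (rule Z.real_cond_exp_add) (auto intro: assms)
  from r i show ?thesis by eventually_elim (simp add: condexpX_def complex_eq_iff)
qed

lemma condexpX_cmult:
  assumes "integrable MZ h"
  shows "AE z in MZ. condexpX (\<lambda>w. complex_of_real c * h w) z = complex_of_real c * condexpX h z"
proof -
  have r: "AE z in MZ. real_cond_exp MZ Xalg (\<lambda>w. c * Re (h w)) z = c * real_cond_exp MZ Xalg (\<lambda>w. Re (h w)) z"
    by (rule Z.real_cond_exp_cmult) (auto intro: assms)
  have i: "AE z in MZ. real_cond_exp MZ Xalg (\<lambda>w. c * Im (h w)) z = c * real_cond_exp MZ Xalg (\<lambda>w. Im (h w)) z"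
    by (rule Z.real_cond_exp_cmult) (auto intro: assms)
  from r i show ?thesis by eventually_elim (simp add: condexpX_def complex_eq_iff)
qed

lemma five_le:
  fixes x1 x2 x3 x4 x5 :: complex
  shows "(cmod (x1 + x2 + x3 - x4 - x5))\<^sup>2 \<le> 5 * (cmod x1)\<^sup>2 + 5 * (cmod x2)\<^sup>2 + 5 * (cmod x3)\<^sup>2 + 5 * (cmod x4)\<^sup>2 + 5 * (cmod x5)\<^sup>2"
proof -
  define p1 where "p1 = cmod x1"
  define p2 where "p2 = cmod x2"
  define p3 where "p3 = cmod x3"
  define p4 where "p4 = cmod x4"
  define p5 where "p5 = cmod x5"
  have "cmod (x1 + x2 + x3 - x4 - x5) \<le> cmod (x1 + x2 + x3 - x4) + cmod x5" by (rule norm_triangle_ineq4)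
  also have "cmod (x1 + x2 + x3 - x4) \<le> cmod (x1 + x2 + x3) + cmod x4" by (rule norm_triangle_ineq4)
  also have "cmod (x1 + x2 + x3) \<le> cmod (x1 + x2) + cmod x3" by (rule norm_triangle_ineq)
  also have "cmod (x1 + x2) \<le> cmod x1 + cmod x2" by (rule norm_triangle_ineq)
  finally have "cmod (x1 + x2 + x3 - x4 - x5) \<le> p1 + p2 + p3 + p4 + p5"
    unfolding p1_def p2_def p3_def p4_def p5_def by simp
  then have "(cmod (x1 + x2 + x3 - x4 - x5))\<^sup>2 \<le> (p1 + p2 + p3 + p4 + p5)\<^sup>2"
    by (intro power_mono) auto
  also have "\<dots> \<le> 5 * p1\<^sup>2 + 5 * p2\<^sup>2 + 5 * p3\<^sup>2 + 5 * p4\<^sup>2 + 5 * p5\<^sup>2"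
  proof -
    have e: "5 * p1\<^sup>2 + 5 * p2\<^sup>2 + 5 * p3\<^sup>2 + 5 * p4\<^sup>2 + 5 * p5\<^sup>2 - (p1 + p2 + p3 + p4 + p5)\<^sup>2
      = (p1 - p2)\<^sup>2 + (p1 - p3)\<^sup>2 + (p1 - p4)\<^sup>2 + (p1 - p5)\<^sup>2 + (p2 - p3)\<^sup>2 + (p2 - p4)\<^sup>2
        + (p2 - p5)\<^sup>2 + (p3 - p4)\<^sup>2 + (p3 - p5)\<^sup>2 + (p4 - p5)\<^sup>2"
      by algebra
    have "0 \<le> (p1 - p2)\<^sup>2 + (p1 - p3)\<^sup>2 + (p1 - p4)\<^sup>2 + (p1 - p5)\<^sup>2 + (p2 - p3)\<^sup>2 + (p2 - p4)\<^sup>2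
        + (p2 - p5)\<^sup>2 + (p3 - p4)\<^sup>2 + (p3 - p5)\<^sup>2 + (p4 - p5)\<^sup>2" by simp
    then show ?thesis using e by linarith
  qed
  finally have "(cmod (x1 + x2 + x3 - x4 - x5))\<^sup>2 \<le> 5 * p1\<^sup>2 + 5 * p2\<^sup>2 + 5 * p3\<^sup>2 + 5 * p4\<^sup>2 + 5 * p5\<^sup>2" .
  then show ?thesis by (simp add: p1_def p2_def p3_def p4_def p5_def)
qed




lemma e5: "(x::real) \<ge> 0 \<Longrightarrow> numeral k * ennreal x = ennreal (numeral k * x)"
  by (simp add: ennreal_mult)

lemma Phi_cong_AE: "AE z in MZ. u z = v z \<Longrightarrow> Phi u = Phi v"
  unfolding Phi_def by (rule nn_integral_cong_AE) (auto elim: eventually_mono)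

lemma Phi_scale:
  assumes [measurable]: "u \<in> borel_measurable MZ"
  shows "Phi (\<lambda>z. complex_of_real c * u z) = ennreal (c\<^sup>2) * Phi u"
proof -
  have "Phi (\<lambda>z. complex_of_real c * u z) = (\<integral>\<^sup>+ z. ennreal (c\<^sup>2) * ennreal ((cmod (u z))\<^sup>2) \<partial>MZ)"
    unfolding Phi_def by (rule nn_integral_cong) (simp add: norm_mult power_mult_distrib ennreal_mult)
  also have "\<dots> = ennreal (c\<^sup>2) * Phi u"
    unfolding Phi_def by (rule nn_integral_cmult) measurable
  finally show ?thesis .
qed

lemma Phi_five:
  assumes [measurable]: "x1 \<in> borel_measurable MZ" "x2 \<in> borel_measurable MZ" "x3 \<in> borel_measurable MZ"
    "x4 \<in> borel_measurable MZ" "x5 \<in> borel_measurable MZ"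
  shows "Phi (\<lambda>z. x1 z + x2 z + x3 z - x4 z - x5 z) \<le> 5 * (Phi x1 + Phi x2 + Phi x3 + Phi x4 + Phi x5)"
proof -
  let ?a1 = "\<lambda>z. ennreal ((cmod (x1 z))\<^sup>2)" and ?a2 = "\<lambda>z. ennreal ((cmod (x2 z))\<^sup>2)"
    and ?a3 = "\<lambda>z. ennreal ((cmod (x3 z))\<^sup>2)" and ?a4 = "\<lambda>z. ennreal ((cmod (x4 z))\<^sup>2)"
    and ?a5 = "\<lambda>z. ennreal ((cmod (x5 z))\<^sup>2)"
  have "Phi (\<lambda>z. x1 z + x2 z + x3 z - x4 z - x5 z) \<le> (\<integral>\<^sup>+ z. 5 * (?a1 z + ?a2 z + ?a3 z + ?a4 z + ?a5 z) \<partial>MZ)"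
    unfolding Phi_def
  proof (rule nn_integral_mono)
    fix z
    have "ennreal ((cmod (x1 z + x2 z + x3 z - x4 z - x5 z))\<^sup>2) \<le>
        ennreal (5 * (cmod (x1 z))\<^sup>2 + 5 * (cmod (x2 z))\<^sup>2 + 5 * (cmod (x3 z))\<^sup>2 + 5 * (cmod (x4 z))\<^sup>2 + 5 * (cmod (x5 z))\<^sup>2)"
      by (rule ennreal_leI) (rule five_le)
    also have "\<dots> = 5 * (?a1 z + ?a2 z + ?a3 z + ?a4 z + ?a5 z)"
      by (simp add: ennreal_plus[symmetric] e5 del: ennreal_plus)
    finally show "ennreal ((cmod (x1 z + x2 z + x3 z - x4 z - x5 z))\<^sup>2) \<le> 5 * (?a1 z + ?a2 z + ?a3 z + ?a4 z + ?a5 z)" .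
  qed
  also have "\<dots> = 5 * (\<integral>\<^sup>+ z. ?a1 z + ?a2 z + ?a3 z + ?a4 z + ?a5 z \<partial>MZ)"
    by (rule nn_integral_cmult) measurable
  also have "(\<integral>\<^sup>+ z. ?a1 z + ?a2 z + ?a3 z + ?a4 z + ?a5 z \<partial>MZ) = (\<integral>\<^sup>+ z. ?a1 z + ?a2 z + ?a3 z + ?a4 z \<partial>MZ) + Phi x5"
    unfolding Phi_def by (rule nn_integral_add; measurable)
  also have "(\<integral>\<^sup>+ z. ?a1 z + ?a2 z + ?a3 z + ?a4 z \<partial>MZ) = (\<integral>\<^sup>+ z. ?a1 z + ?a2 z + ?a3 z \<partial>MZ) + Phi x4"
    unfolding Phi_def by (rule nn_integral_add; measurable)
  also have "(\<integral>\<^sup>+ z. ?a1 z + ?a2 z + ?a3 z \<partial>MZ) = (\<integral>\<^sup>+ z. ?a1 z + ?a2 z \<partial>MZ) + Phi x3"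
    unfolding Phi_def by (rule nn_integral_add; measurable)
  also have "(\<integral>\<^sup>+ z. ?a1 z + ?a2 z \<partial>MZ) = Phi x1 + Phi x2"
    unfolding Phi_def by (rule nn_integral_add; measurable)
  finally show ?thesis .
qed

lemma cb1_unit: "cb h 1 \<Longrightarrow> h \<in> unit_ballZX"
proof -
  assume h: "cb h 1"
  have le: "esssup MZ (condnorm2 h) \<le> 1"
    unfolding condnorm2_def using h unfolding cb_def by (intro esssup_I) auto
  then have "esssup MZ (condnorm2 h) < \<infinity>" using order.strict_trans1 by fastforce
  with le h show ?thesis unfolding unit_ballZX_def L2ZX_def cb_def by auto
qed

lemma unit_cb: "h \<in> unit_ballZX \<Longrightarrow> cb h 1"
proof -
  assume h: "h \<in> unit_ballZX"
  have "AE z in MZ. condnorm2 h z \<le> esssup MZ (condnorm2 h)" by (rule esssup_AE)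
  then have "AE z in MZ. condnorm2 h z \<le> 1" using h unfolding unit_ballZX_def
    by (auto elim: eventually_mono intro: order_trans)
  then show "cb h 1" using h unfolding cb_def condnorm2_def unit_ballZX_def L2ZX_def by auto
qed

lemma L2_cb: "h \<in> L2ZX \<Longrightarrow> \<exists>C. cb h C"
proof -
  assume h: "h \<in> L2ZX"
  define C where "C = enn2real (esssup MZ (condnorm2 h))"
  have "esssup MZ (condnorm2 h) = ennreal C" using h unfolding L2ZX_def C_def
    by (auto simp: ennreal_enn2real_if less_top)
  moreover have "AE z in MZ. condnorm2 h z \<le> esssup MZ (condnorm2 h)" by (rule esssup_AE)
  ultimately have "AE z in MZ. condnorm2 h z \<le> ennreal C" by simp
  then have "cb h C" using h unfolding cb_def condnorm2_def L2ZX_def C_def by auto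
  then show ?thesis ..
qed

context shiftU
begin

lemma decomp:
  fixes c :: real and m :: nat
  assumes f: "cb f (c\<^sup>2)" and g: "cb g (c\<^sup>2)" and fi: "cb fi 1" and fj: "cb fj 1" and c: "c \<ge> 0"
  shows "AE z in MZ. condexpX (\<lambda>w. f ((U^^m) w) * cnj (g w)) z =
     complex_of_real (c\<^sup>2) * condexpX (\<lambda>w. fi ((U^^m) w) * cnj (fj w)) z
     + condexpX (\<lambda>w. (f ((U^^m) w) - complex_of_real c * fi ((U^^m) w)) * cnj (g w)) z
     + condexpX (\<lambda>w. (complex_of_real c * fi ((U^^m) w)) * cnj (g w - complex_of_real c * fj w)) z"
proof -
  have cf: "cb (\<lambda>w. f ((U^^m) w)) (c\<^sup>2)" by (rule iter_step[OF f])
  have cfi: "cb (\<lambda>w. fi ((U^^m) w)) 1" by (rule iter_step[OF fi])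
  have c1: "cb (\<lambda>w. f ((U^^m) w) - complex_of_real c * fi ((U^^m) w)) (2 * c\<^sup>2 + (2 * c\<^sup>2) * 1)"
    by (rule cb_diff[OF cf cfi c])
  have c2: "cb (\<lambda>w. complex_of_real c * fi ((U^^m) w)) (c\<^sup>2 * 1 + 0 * 1)" by (rule cb_scale[OF cfi])
  have c3: "cb (\<lambda>w. g w - complex_of_real c * fj w) (2 * c\<^sup>2 + (2 * c\<^sup>2) * 1)" by (rule cb_diff[OF g fj c])
  define p1 where "p1 = (\<lambda>w. fi ((U^^m) w) * cnj (fj w))"
  define p2 where "p2 = (\<lambda>w. (f ((U^^m) w) - complex_of_real c * fi ((U^^m) w)) * cnj (g w))"
  define p3 where "p3 = (\<lambda>w. (complex_of_real c * fi ((U^^m) w)) * cnj (g w - complex_of_real c * fj w))"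
  have i1: "integrable MZ p1" unfolding p1_def by (rule cross_integrable[OF cfi fj])
  have i2: "integrable MZ p2" unfolding p2_def by (rule cross_integrable[OF c1 g])
  have i3: "integrable MZ p3" unfolding p3_def by (rule cross_integrable[OF c2 c3])
  have i1': "integrable MZ (\<lambda>w. complex_of_real (c\<^sup>2) * p1 w)" using i1 by (rule integrable_mult_right)
  have i12: "integrable MZ (\<lambda>w. complex_of_real (c\<^sup>2) * p1 w + p2 w)" using i1' i2 by (rule Bochner_Integration.integrable_add)
  have eq: "(\<lambda>w. f ((U^^m) w) * cnj (g w)) = (\<lambda>w. (complex_of_real (c\<^sup>2) * p1 w + p2 w) + p3 w)"
    unfolding p1_def p2_def p3_def
    apply (rule ext)
    apply (simp add: power2_eq_square)
    apply (simp add: algebra_simps)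
    done
  have a1: "AE z in MZ. condexpX (\<lambda>w. (complex_of_real (c\<^sup>2) * p1 w + p2 w) + p3 w) z
      = condexpX (\<lambda>w. complex_of_real (c\<^sup>2) * p1 w + p2 w) z + condexpX p3 z"
    by (rule condexpX_add[OF i12 i3])
  have a2: "AE z in MZ. condexpX (\<lambda>w. complex_of_real (c\<^sup>2) * p1 w + p2 w) z
      = condexpX (\<lambda>w. complex_of_real (c\<^sup>2) * p1 w) z + condexpX p2 z"
    by (rule condexpX_add[OF i1' i2])
  have a3: "AE z in MZ. condexpX (\<lambda>w. complex_of_real (c\<^sup>2) * p1 w) z = complex_of_real (c\<^sup>2) * condexpX p1 z"
    by (rule condexpX_cmult[OF i1])
  from a1 a2 a3 have "AE z in MZ. condexpX (\<lambda>w. f ((U^^m) w) * cnj (g w)) z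
      = complex_of_real (c\<^sup>2) * condexpX p1 z + condexpX p2 z + condexpX p3 z"
    unfolding eq by eventually_elim simp
  then show ?thesis unfolding p1_def p2_def p3_def .
qed

lemma tbound1:
  fixes c :: real and m :: nat
  assumes f: "cb f (c\<^sup>2)" and g: "cb g (c\<^sup>2)" and fi: "cb fi 1" and c: "c \<ge> 0" and \<eta>: "\<eta> > 0"
    and Pf: "Phi (\<lambda>z. f z - complex_of_real c * fi z) \<le> ennreal (c\<^sup>2 * \<eta>\<^sup>2)"
  shows "Phi (condexpX (\<lambda>w. (f ((U^^m) w) - complex_of_real c * fi ((U^^m) w)) * cnj (g w)))
      \<le> ennreal (40 * (c\<^sup>2 * c\<^sup>2) * \<eta>)"
proof -
  have cf: "cb (\<lambda>w. f ((U^^m) w)) (c\<^sup>2)" by (rule iter_step[OF f])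
  have cfi: "cb (\<lambda>w. fi ((U^^m) w)) 1" by (rule iter_step[OF fi])
  have c1: "cb (\<lambda>w. f ((U^^m) w) - complex_of_real c * fi ((U^^m) w)) (2 * c\<^sup>2 + (2 * c\<^sup>2) * 1)"
    by (rule cb_diff[OF cf cfi c])
  have [measurable]: "f \<in> borel_measurable MZ" "fi \<in> borel_measurable MZ" using f fi unfolding cb_def by auto
  have "Phi (\<lambda>w. f ((U^^m) w) - complex_of_real c * fi ((U^^m) w)) = Phi (\<lambda>z. f z - complex_of_real c * fi z)"
    unfolding Phi_def by (rule nn_int_pres) measurable
  then have Pa: "Phi (\<lambda>w. f ((U^^m) w) - complex_of_real c * fi ((U^^m) w)) \<le> ennreal (c\<^sup>2 * \<eta>\<^sup>2)" using Pf by simp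
  have "Phi (condexpX (\<lambda>w. (f ((U^^m) w) - complex_of_real c * fi ((U^^m) w)) * cnj (g w)))
      \<le> ennreal (4 * ((2 * c\<^sup>2 + (2 * c\<^sup>2) * 1) + c\<^sup>2) * ((c\<^sup>2 * \<eta>\<^sup>2) / \<eta> + \<eta> * c\<^sup>2))"
    by (rule cross_Phi'[OF c1 g \<eta> Pa cb_Phi[OF g]]) auto
  also have "(c\<^sup>2 * \<eta>\<^sup>2) / \<eta> = c\<^sup>2 * \<eta>" using \<eta> by (simp add: power2_eq_square)
  also have "4 * ((2 * c\<^sup>2 + (2 * c\<^sup>2) * 1) + c\<^sup>2) * (c\<^sup>2 * \<eta> + \<eta> * c\<^sup>2) = 40 * (c\<^sup>2 * c\<^sup>2) * \<eta>"
    by (simp add: algebra_simps)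
  finally show ?thesis .
qed

lemma tbound2:
  fixes c :: real and m :: nat
  assumes g: "cb g (c\<^sup>2)" and fi: "cb fi 1" and fj: "cb fj 1" and c: "c \<ge> 0" and \<eta>: "\<eta> > 0"
    and Pg: "Phi (\<lambda>z. g z - complex_of_real c * fj z) \<le> ennreal (c\<^sup>2 * \<eta>\<^sup>2)"
  shows "Phi (condexpX (\<lambda>w. (complex_of_real c * fi ((U^^m) w)) * cnj (g w - complex_of_real c * fj w)))
      \<le> ennreal (40 * (c\<^sup>2 * c\<^sup>2) * \<eta>)"
proof -
  have cfi: "cb (\<lambda>w. fi ((U^^m) w)) 1" by (rule iter_step[OF fi])
  have c2: "cb (\<lambda>w. complex_of_real c * fi ((U^^m) w)) (c\<^sup>2 * 1 + 0 * 1)" by (rule cb_scale[OF cfi])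
  have c3: "cb (\<lambda>w. g w - complex_of_real c * fj w) (2 * c\<^sup>2 + (2 * c\<^sup>2) * 1)" by (rule cb_diff[OF g fj c])
  have \<eta>': "1 / \<eta> > 0" using \<eta> by simp
  have "Phi (condexpX (\<lambda>w. (complex_of_real c * fi ((U^^m) w)) * cnj (g w - complex_of_real c * fj w)))
      \<le> ennreal (4 * ((c\<^sup>2 * 1 + 0 * 1) + (2 * c\<^sup>2 + (2 * c\<^sup>2) * 1)) * ((c\<^sup>2 * 1 + 0 * 1) / (1 / \<eta>) + (1 / \<eta>) * (c\<^sup>2 * \<eta>\<^sup>2)))"
    by (rule cross_Phi'[OF c2 c3 \<eta>' cb_Phi[OF c2] Pg]) auto
  also have "(1 / \<eta>) * (c\<^sup>2 * \<eta>\<^sup>2) = c\<^sup>2 * \<eta>" using \<eta> by (simp add: power2_eq_square)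
  also have "(c\<^sup>2 * 1 + 0 * 1) / (1 / \<eta>) = c\<^sup>2 * \<eta>" by simp
  also have "4 * ((c\<^sup>2 * 1 + 0 * 1) + (2 * c\<^sup>2 + (2 * c\<^sup>2) * 1)) * (c\<^sup>2 * \<eta> + c\<^sup>2 * \<eta>) = 40 * (c\<^sup>2 * c\<^sup>2) * \<eta>"
    by (simp add: algebra_simps)
  finally show ?thesis .
qed

lemma CE_fin:
  assumes fi: "cb fi 1" and fj: "cb fj 1"
  shows "Phi (condexpX (\<lambda>w. fi ((U^^m) w) * cnj (fj w))) \<le> ennreal 16"
proof -
  have cfi: "cb (\<lambda>w. fi ((U^^m) w)) 1" by (rule iter_step[OF fi])
  have "Phi (condexpX (\<lambda>w. fi ((U^^m) w) * cnj (fj w))) \<le> ennreal (4 * (1 + 1) * (1 / 1 + 1 * 1))"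
    by (rule cross_Phi'[OF cfi fj _ cb_Phi[OF cfi] cb_Phi[OF fj]]) auto
  then show ?thesis by simp
qed

end


lemma shiftU_T:
  assumes T0: "T0 \<in> G MX" and T: "T \<in> G_ext T0"
  shows "shiftU T0 T"
proof
  show "T0 \<in> G MX" by (rule T0)
  show "T \<in> MZ \<rightarrow>\<^sub>M MZ" "distr MZ MZ T = MZ" using T unfolding G_ext_def G_def by auto
  fix z assume z: "z \<in> space MZ"
  obtain Tx where Tx: "\<forall>x \<in> space MX. Tx x \<in> G MX \<and> (\<forall>y \<in> space MX. T (x, y) = (T0 x, Tx x y))"
    using T unfolding G_ext_def by auto
  obtain x y where xy: "z = (x, y)" "x \<in> space MX" "y \<in> space MX"
    using z unfolding space_MZ space_MX by auto
  show "fst (T z) = T0 (fst z)" using Tx xy by auto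
qed

lemma shiftU_lift:
  assumes T0: "T0 \<in> G MX"
  shows "shiftU T0 (liftX T0)"
proof
  have T0m[measurable]: "T0 \<in> MX \<rightarrow>\<^sub>M MX" using T0 unfolding G_def by auto
  have T0d: "distr MX MX T0 = MX" using T0 unfolding G_def by auto
  have eq: "liftX T0 = (\<lambda>z. (T0 (fst z), snd z))" unfolding liftX_def by (auto simp: split_def)
  show "T0 \<in> G MX" by (rule T0)
  show "liftX T0 \<in> MZ \<rightarrow>\<^sub>M MZ" unfolding eq MZ_def by measurable
  have sf: "sigma_finite_measure (distr MX MX (\<lambda>x. x))"
    using prob_space_imp_sigma_finite[OF prob_MX] by simp
  have "distr MX MX T0 \<Otimes>\<^sub>M distr MX MX (\<lambda>x. x) = distr (MX \<Otimes>\<^sub>M MX) (MX \<Otimes>\<^sub>M MX) (\<lambda>(x, y). (T0 x, y))"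
    by (rule pair_measure_distr[OF T0m measurable_ident_sets[OF refl] sf])
  then show "distr MZ MZ (liftX T0) = MZ" unfolding MZ_def liftX_def T0d by simp
  fix z assume "z \<in> space MZ"
  show "fst (liftX T0 z) = T0 (fst z)" by (simp add: eq)
qed

locale mainloc =
  fixes T0 :: "real \<Rightarrow> real"
    and T :: "real \<times> real \<Rightarrow> real \<times> real"
    and D :: "(real \<times> real \<Rightarrow> complex) set"
    and n :: "nat \<Rightarrow> nat"
  assumes T0: "T0 \<in> G MX"
    and T: "T \<in> G_ext T0"
    and DU: "D \<subseteq> unit_ballZX"
    and dens: "\<forall>f \<in> unit_ballZX. \<forall>e > 0. \<exists>g \<in> D. L2norm (\<lambda>z. f z - g z) < e"
    and hyp: "\<forall>fi \<in> D. \<forall>fj \<in> D.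
           (\<lambda>k. L2norm (\<lambda>z. condexpX (\<lambda>w. fi ((T ^^ n k) w) * cnj (fj w)) z
                           - condexpX (\<lambda>w. fi ((liftX T0 ^^ n k) w) * cnj (fj w)) z))
           \<longlonglongrightarrow> 0"
begin

sublocale ST: shiftU T0 T by (rule shiftU_T[OF T0 T])
sublocale SL: shiftU T0 "liftX T0" by (rule shiftU_lift[OF T0])

lemma approx:
  assumes f: "cb f (c\<^sup>2)" and c: "c \<ge> 1" and \<eta>: "\<eta> > 0"
  shows "\<exists>fi \<in> D. cb fi 1 \<and> Phi (\<lambda>z. f z - complex_of_real c * fi z) \<le> ennreal (c\<^sup>2 * \<eta>\<^sup>2)"
proof -
  have [measurable]: "f \<in> borel_measurable MZ" using f unfolding cb_def by auto
  define f' where "f' = (\<lambda>z. complex_of_real (1 / c) * f z)"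
  have "cb f' ((1 / c)\<^sup>2 * c\<^sup>2 + 0 * c\<^sup>2)" unfolding f'_def by (rule cb_scale[OF f])
  moreover have "(1 / c)\<^sup>2 * c\<^sup>2 + 0 * c\<^sup>2 = 1" using c by (simp add: power2_eq_square)
  ultimately have f'1: "cb f' 1" by simp
  then have "f' \<in> unit_ballZX" by (rule cb1_unit)
  then obtain fi where fi: "fi \<in> D" "L2norm (\<lambda>z. f' z - fi z) < \<eta>" using dens \<eta> by blast
  have fi1: "cb fi 1" using fi DU unit_cb by auto
  have [measurable]: "f' \<in> borel_measurable MZ" "fi \<in> borel_measurable MZ" using f'1 fi1 unfolding cb_def by auto
  have "Phi (\<lambda>z. f' z - fi z) \<le> 2 * Phi f' + 2 * Phi fi" by (rule Phi_diff) measurable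
  also have "\<dots> \<le> 2 * ennreal 1 + 2 * ennreal 1"
    using cb_Phi[OF f'1] cb_Phi[OF fi1] by (intro add_mono mult_left_mono) auto
  also have "\<dots> < \<infinity>" by simp
  finally have fin: "Phi (\<lambda>z. f' z - fi z) < \<infinity>" .
  have lt: "Phi (\<lambda>z. f' z - fi z) < ennreal (\<eta>\<^sup>2)"
    by (rule Phi_L2_lt[OF _ fin fi(2)]) measurable
  have eqf: "(\<lambda>z. f z - complex_of_real c * fi z) = (\<lambda>z. complex_of_real c * (f' z - fi z))"
    using c by (auto simp: f'_def algebra_simps)
  have "Phi (\<lambda>z. f z - complex_of_real c * fi z) = ennreal (c\<^sup>2) * Phi (\<lambda>z. f' z - fi z)"
    unfolding eqf by (rule Phi_scale) measurable
  also have "\<dots> \<le> ennreal (c\<^sup>2) * ennreal (\<eta>\<^sup>2)" using lt by (intro mult_left_mono) auto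
  also have "\<dots> = ennreal (c\<^sup>2 * \<eta>\<^sup>2)" by (simp add: ennreal_mult)
  finally show ?thesis using fi fi1 by blast
qed

lemma Fbound:
  fixes c :: real and m :: nat
  assumes f: "cb f (c\<^sup>2)" and g: "cb g (c\<^sup>2)" and fi: "cb fi 1" and fj: "cb fj 1" and c: "c \<ge> 0" and \<eta>: "\<eta> > 0"
    and Pf: "Phi (\<lambda>z. f z - complex_of_real c * fi z) \<le> ennreal (c\<^sup>2 * \<eta>\<^sup>2)"
    and Pg: "Phi (\<lambda>z. g z - complex_of_real c * fj z) \<le> ennreal (c\<^sup>2 * \<eta>\<^sup>2)"
  shows "Phi (\<lambda>z. condexpX (\<lambda>w. f ((T ^^ m) w) * cnj (g w)) z - condexpX (\<lambda>w. f ((liftX T0 ^^ m) w) * cnj (g w)) z)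
    \<le> 5 * (ennreal ((c\<^sup>2)\<^sup>2) * Phi (\<lambda>z. condexpX (\<lambda>w. fi ((T ^^ m) w) * cnj (fj w)) z - condexpX (\<lambda>w. fi ((liftX T0 ^^ m) w) * cnj (fj w)) z)
      + ennreal (40 * (c\<^sup>2 * c\<^sup>2) * \<eta>) + ennreal (40 * (c\<^sup>2 * c\<^sup>2) * \<eta>)
      + ennreal (40 * (c\<^sup>2 * c\<^sup>2) * \<eta>) + ennreal (40 * (c\<^sup>2 * c\<^sup>2) * \<eta>))"
proof -
  let ?DT = "condexpX (\<lambda>w. fi ((T ^^ m) w) * cnj (fj w))"
  let ?DS = "condexpX (\<lambda>w. fi ((liftX T0 ^^ m) w) * cnj (fj w))"
  let ?t1T = "condexpX (\<lambda>w. (f ((T^^m) w) - complex_of_real c * fi ((T^^m) w)) * cnj (g w))"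
  let ?t2T = "condexpX (\<lambda>w. (complex_of_real c * fi ((T^^m) w)) * cnj (g w - complex_of_real c * fj w))"
  let ?t1S = "condexpX (\<lambda>w. (f ((liftX T0^^m) w) - complex_of_real c * fi ((liftX T0^^m) w)) * cnj (g w))"
  let ?t2S = "condexpX (\<lambda>w. (complex_of_real c * fi ((liftX T0^^m) w)) * cnj (g w - complex_of_real c * fj w))"
  have dT: "AE z in MZ. condexpX (\<lambda>w. f ((T^^m) w) * cnj (g w)) z = complex_of_real (c\<^sup>2) * ?DT z + ?t1T z + ?t2T z"
    by (rule ST.decomp[OF f g fi fj c])
  have dS: "AE z in MZ. condexpX (\<lambda>w. f ((liftX T0^^m) w) * cnj (g w)) z = complex_of_real (c\<^sup>2) * ?DS z + ?t1S z + ?t2S z"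
    by (rule SL.decomp[OF f g fi fj c])
  have "AE z in MZ. condexpX (\<lambda>w. f ((T ^^ m) w) * cnj (g w)) z - condexpX (\<lambda>w. f ((liftX T0 ^^ m) w) * cnj (g w)) z
      = complex_of_real (c\<^sup>2) * (?DT z - ?DS z) + ?t1T z + ?t2T z - ?t1S z - ?t2S z"
    using dT dS by eventually_elim (simp add: algebra_simps)
  then have "Phi (\<lambda>z. condexpX (\<lambda>w. f ((T ^^ m) w) * cnj (g w)) z - condexpX (\<lambda>w. f ((liftX T0 ^^ m) w) * cnj (g w)) z)
      = Phi (\<lambda>z. complex_of_real (c\<^sup>2) * (?DT z - ?DS z) + ?t1T z + ?t2T z - ?t1S z - ?t2S z)"
    by (rule Phi_cong_AE)
  also have "\<dots> \<le> 5 * (Phi (\<lambda>z. complex_of_real (c\<^sup>2) * (?DT z - ?DS z)) + Phi ?t1T + Phi ?t2T + Phi ?t1S + Phi ?t2S)"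
    by (rule Phi_five) measurable
  also have "Phi (\<lambda>z. complex_of_real (c\<^sup>2) * (?DT z - ?DS z)) = ennreal ((c\<^sup>2)\<^sup>2) * Phi (\<lambda>z. ?DT z - ?DS z)"
    by (rule Phi_scale) measurable
  also have "5 * (ennreal ((c\<^sup>2)\<^sup>2) * Phi (\<lambda>z. ?DT z - ?DS z) + Phi ?t1T + Phi ?t2T + Phi ?t1S + Phi ?t2S)
     \<le> 5 * (ennreal ((c\<^sup>2)\<^sup>2) * Phi (\<lambda>z. ?DT z - ?DS z)
      + ennreal (40 * (c\<^sup>2 * c\<^sup>2) * \<eta>) + ennreal (40 * (c\<^sup>2 * c\<^sup>2) * \<eta>)
      + ennreal (40 * (c\<^sup>2 * c\<^sup>2) * \<eta>) + ennreal (40 * (c\<^sup>2 * c\<^sup>2) * \<eta>))"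
    using ST.tbound1[OF f g fi c \<eta> Pf, of m] ST.tbound2[OF g fi fj c \<eta> Pg, of m]
      SL.tbound1[OF f g fi c \<eta> Pf, of m] SL.tbound2[OF g fi fj c \<eta> Pg, of m]
    by (intro mult_left_mono add_mono order_refl) auto
  finally show ?thesis .
qed


lemma conv:
  assumes f: "cb f (c\<^sup>2)" and g: "cb g (c\<^sup>2)" and c: "c \<ge> 1"
  shows "(\<lambda>k. L2norm (\<lambda>z. condexpX (\<lambda>w. f ((T ^^ n k) w) * cnj (g w)) z
                         - condexpX (\<lambda>w. f ((liftX T0 ^^ n k) w) * cnj (g w)) z)) \<longlonglongrightarrow> 0"
proof (rule LIMSEQ_I)
  fix r :: real assume r: "r > 0"
  define c4 where "c4 = c\<^sup>2 * c\<^sup>2"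
  have c4: "c4 > 0" using c unfolding c4_def by simp
  have c4': "(c\<^sup>2)\<^sup>2 = c4" unfolding c4_def by (simp add: power2_eq_square)
  define \<eta> where "\<eta> = r\<^sup>2 / (1600 * c4)"
  have \<eta>: "\<eta> > 0" unfolding \<eta>_def using r c4 by simp
  obtain fi where fi: "fi \<in> D" "cb fi 1" "Phi (\<lambda>z. f z - complex_of_real c * fi z) \<le> ennreal (c\<^sup>2 * \<eta>\<^sup>2)"
    using approx[OF f c \<eta>] by blast
  obtain fj where fj: "fj \<in> D" "cb fj 1" "Phi (\<lambda>z. g z - complex_of_real c * fj z) \<le> ennreal (c\<^sup>2 * \<eta>\<^sup>2)"
    using approx[OF g c \<eta>] by blast
  define \<rho> where "\<rho> = sqrt (r\<^sup>2 / (10 * c4))"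
  have \<rho>: "\<rho> > 0" unfolding \<rho>_def using r c4 by simp
  have \<rho>2: "\<rho>\<^sup>2 = r\<^sup>2 / (10 * c4)" unfolding \<rho>_def using c4 by simp
  let ?D = "\<lambda>k. (\<lambda>z. condexpX (\<lambda>w. fi ((T ^^ n k) w) * cnj (fj w)) z
                           - condexpX (\<lambda>w. fi ((liftX T0 ^^ n k) w) * cnj (fj w)) z)"
  have "(\<lambda>k. L2norm (?D k)) \<longlonglongrightarrow> 0" using hyp fi(1) fj(1) by blast
  then have "eventually (\<lambda>k. L2norm (?D k) < \<rho>) sequentially"
    by (rule order_tendstoD(2)) (rule \<rho>)
  then obtain N where N: "\<And>k. k \<ge> N \<Longrightarrow> L2norm (?D k) < \<rho>" by (auto simp: eventually_sequentially)
  show "\<exists>no. \<forall>k\<ge>no. norm (L2norm (\<lambda>z. condexpX (\<lambda>w. f ((T ^^ n k) w) * cnj (g w)) z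
                         - condexpX (\<lambda>w. f ((liftX T0 ^^ n k) w) * cnj (g w)) z) - 0) < r"
  proof (intro exI allI impI)
    fix k assume k: "k \<ge> N"
    have fin: "Phi (?D k) < \<infinity>"
    proof -
      have "Phi (?D k) \<le> 2 * Phi (condexpX (\<lambda>w. fi ((T ^^ n k) w) * cnj (fj w)))
          + 2 * Phi (condexpX (\<lambda>w. fi ((liftX T0 ^^ n k) w) * cnj (fj w)))"
        by (rule Phi_diff) measurable
      also have "\<dots> \<le> 2 * ennreal 16 + 2 * ennreal 16"
        using ST.CE_fin[OF fi(2) fj(2), of "n k"] SL.CE_fin[OF fi(2) fj(2), of "n k"]
        by (intro add_mono mult_left_mono) auto
      also have "\<dots> < \<infinity>" by simp
      finally show ?thesis .
    qed
    have PD: "Phi (?D k) < ennreal (\<rho>\<^sup>2)"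
      by (rule Phi_L2_lt[OF _ fin N[OF k]]) measurable
    obtain p where p: "Phi (?D k) = ennreal p" "p \<ge> 0" using fin by (cases "Phi (?D k)") auto
    have pr: "p < \<rho>\<^sup>2" using PD p by (simp add: ennreal_less_iff)
    define K where "K = 40 * (c\<^sup>2 * c\<^sup>2) * \<eta>"
    have K: "K \<ge> 0" unfolding K_def using \<eta> by simp
    have "Phi (\<lambda>z. condexpX (\<lambda>w. f ((T ^^ n k) w) * cnj (g w)) z - condexpX (\<lambda>w. f ((liftX T0 ^^ n k) w) * cnj (g w)) z)
      \<le> 5 * (ennreal ((c\<^sup>2)\<^sup>2) * Phi (?D k) + ennreal K + ennreal K + ennreal K + ennreal K)"
      unfolding K_def by (rule Fbound[OF f g fi(2) fj(2) _ \<eta> fi(3) fj(3)]) (use c in simp)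
    also have "\<dots> = ennreal (5 * (c4 * p + 4 * K))"
      unfolding c4' p(1) using c4 p(2) K
      by (simp add: ennreal_mult[symmetric] ennreal_plus[symmetric] e5 del: ennreal_plus)
    also have "\<dots> < ennreal (r\<^sup>2)"
    proof (rule ennreal_lessI)
      show "0 < r\<^sup>2" using r by simp
      have "5 * (c4 * p) < 5 * (c4 * \<rho>\<^sup>2)" using pr c4 by simp
      also have "5 * (c4 * \<rho>\<^sup>2) = r\<^sup>2 / 2" unfolding \<rho>2 using c4 by simp
      finally have a: "5 * (c4 * p) < r\<^sup>2 / 2" .
      have "20 * K = r\<^sup>2 / 2" unfolding K_def \<eta>_def c4_def[symmetric] using c4 by simp
      with a show "5 * (c4 * p + 4 * K) < r\<^sup>2" by simp
    qed
    finally have ph: "Phi (\<lambda>z. condexpX (\<lambda>w. f ((T ^^ n k) w) * cnj (g w)) z - condexpX (\<lambda>w. f ((liftX T0 ^^ n k) w) * cnj (g w)) z) < ennreal (r\<^sup>2)" .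
    have lt: "L2norm (\<lambda>z. condexpX (\<lambda>w. f ((T ^^ n k) w) * cnj (g w)) z - condexpX (\<lambda>w. f ((liftX T0 ^^ n k) w) * cnj (g w)) z) < r"
      by (rule L2_Phi_lt[OF _ ph r]) measurable
    have nn: "L2norm (\<lambda>z. condexpX (\<lambda>w. f ((T ^^ n k) w) * cnj (g w)) z - condexpX (\<lambda>w. f ((liftX T0 ^^ n k) w) * cnj (g w)) z) \<ge> 0"
      unfolding L2norm_def by (auto intro!: integral_nonneg)
    show "norm (L2norm (\<lambda>z. condexpX (\<lambda>w. f ((T ^^ n k) w) * cnj (g w)) z
                         - condexpX (\<lambda>w. f ((liftX T0 ^^ n k) w) * cnj (g w)) z) - 0) < r"
      using lt nn by simp
  qed
qed

end

theorem lemma4p3: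
  fixes T0 :: "real \<Rightarrow> real"
    and T :: "real \<times> real \<Rightarrow> real \<times> real"
    and D :: "(real \<times> real \<Rightarrow> complex) set"
    and n :: "nat \<Rightarrow> nat"
  assumes "T0 \<in> G MX"
    and "T \<in> G_ext T0"
    and "D \<subseteq> unit_ballZX"
    and "\<forall>f \<in> unit_ballZX. \<forall>e > 0. \<exists>g \<in> D. L2norm (\<lambda>z. f z - g z) < e"
    and "strict_mono n"
    and "\<forall>fi \<in> D. \<forall>fj \<in> D.
           (\<lambda>k. L2norm (\<lambda>z. condexpX (\<lambda>w. fi ((T ^^ n k) w) * cnj (fj w)) z
                           - condexpX (\<lambda>w. fi ((liftX T0 ^^ n k) w) * cnj (fj w)) z))
           \<longlonglongrightarrow> 0"
  shows "T \<in> R_ext T0"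
proof -
  interpret M: mainloc T0 T D n using assms by unfold_locales auto
  have "\<forall>f \<in> L2ZX. \<forall>g \<in> L2ZX.
         (\<lambda>k. L2norm (\<lambda>z. condexpX (\<lambda>w. f ((T ^^ n k) w) * cnj (g w)) z
                         - condexpX (\<lambda>w. f ((liftX T0 ^^ n k) w) * cnj (g w)) z))
         \<longlonglongrightarrow> 0"
  proof (intro ballI)
    fix f g assume f: "f \<in> L2ZX" and g: "g \<in> L2ZX"
    obtain Cf where Cf: "cb f Cf" using L2_cb[OF f] by blast
    obtain Cg where Cg: "cb g Cg" using L2_cb[OF g] by blast
    have nn: "Cf \<ge> 0" "Cg \<ge> 0" using Cf Cg unfolding cb_def by auto
    define c where "c = 1 + Cf + Cg"
    have c: "c \<ge> 1" unfolding c_def using nn by simp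
    have cc: "c \<le> c\<^sup>2" using c by (simp add: power2_eq_square)
    have "cb f (c\<^sup>2)" by (rule cb_mono[OF Cf]) (use cc nn in \<open>simp add: c_def\<close>)
    moreover have "cb g (c\<^sup>2)" by (rule cb_mono[OF Cg]) (use cc nn in \<open>simp add: c_def\<close>)
    ultimately show "(\<lambda>k. L2norm (\<lambda>z. condexpX (\<lambda>w. f ((T ^^ n k) w) * cnj (g w)) z
                         - condexpX (\<lambda>w. f ((liftX T0 ^^ n k) w) * cnj (g w)) z)) \<longlonglongrightarrow> 0"
      using M.conv c by blast
  qed
  then show ?thesis unfolding R_ext_def using assms(2,5) by blast
qed


end
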